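(* Let $k$ be sufficiently large and $m/n\ge195\cdot2^k\ln^2k/k$. Let $\mathcal M$ be any outcome of the greedy mist construction applied to $\Phi=\Phi_k(n,m)$. Then with probability $1-\exp(-\Omega(n))$, $$|\mathcal D(\Phi,\mathcal M)|\le2^n\exp(-2n/k^2).$$
   Context: $\Phi=\Phi_k(n,m)$ is a uniformly random $k$-CNF with $m$ clauses over $x_1,\dots,x_n$. $\rho=2^{-k}m/n$, $\kappa=\ln k/k$. $\mathcal U_\Phi(\sigma)$ is the number of clauses unsatisfied by $\sigma$, $T(\Phi)=\{\tau:\mathcal U_\Phi(\tau)\le n\rho/10\}$. $\mathrm{dist}$ is Hamming distance and $\mathcal D_\sigma(r_1,r_2)=\{\tau\in\{0,1\}^n:\lfloor r_1\kappa n\rfloor\le\mathrm{dist}(\sigma,\tau)\le\lfloor r_2\kappa n\rfloor\}$. Greedy mist construction: start with $\mathcal M=\emptyset$; while $T(\Phi)\setminus\bigcup_{\mu\in\mathcal M}\mathcal D_\mu(0,2)\ne\emptyset$, add an arbitrary element of this set to $\mathcal M$. $\mathcal D(\Phi,\mathcal M)=\bigcup_{\sigma\in\mathcal M}\mathcal D_\sigma(0,10)$. *)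

theory Defs
  imports Complex_Main
begin

text \<open>Variables x_1..x_n are represented by indices 0..n-1.
  A literal is a pair (i, b): it is satisfied by an assignment sigma iff sigma!i = b.
  A clause is a list of k literals, a formula a list of m clauses; Phi_k(n,m) is the
  uniform distribution on all such formulas (each clause uniform among the (2n)^k
  possible clauses, independently).\<close>

type_synonym literal = "nat \<times> bool"
type_synonym clause = "literal list"
type_synonym cnf = "clause list"
type_synonym assignment = "bool list"

definition kcnf_space :: "nat \<Rightarrow> nat \<Rightarrow> nat \<Rightarrow> cnf set" where
  "kcnf_space n k m = {\<Phi>. length \<Phi> = m \<and>
     (\<forall>C\<in>set \<Phi>. length C = k \<and> (\<forall>l\<in>set C. fst l < n))}"

definition prob_kcnf :: "nat \<Rightarrow> nat \<Rightarrow> nat \<Rightarrow> (cnf \<Rightarrow> bool) \<Rightarrow> real" where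
  "prob_kcnf n k m P = real (card {\<Phi> \<in> kcnf_space n k m. P \<Phi>}) / real (card (kcnf_space n k m))"

definition assignments :: "nat \<Rightarrow> assignment set" where
  "assignments n = {\<sigma>. length \<sigma> = n}"

definition lit_sat :: "assignment \<Rightarrow> literal \<Rightarrow> bool" where
  "lit_sat \<sigma> l = (\<sigma> ! fst l = snd l)"

definition clause_unsat :: "assignment \<Rightarrow> clause \<Rightarrow> bool" where
  "clause_unsat \<sigma> C = (\<forall>l\<in>set C. \<not> lit_sat \<sigma> l)"

definition num_unsat :: "cnf \<Rightarrow> assignment \<Rightarrow> nat" where
  "num_unsat \<Phi> \<sigma> = length (filter (clause_unsat \<sigma>) \<Phi>)"

definition rho :: "nat \<Rightarrow> nat \<Rightarrow> nat \<Rightarrow> real" where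
  "rho n k m = real m / (2 ^ k * real n)"

definition kappa :: "nat \<Rightarrow> real" where
  "kappa k = ln (real k) / real k"

definition Tset :: "nat \<Rightarrow> nat \<Rightarrow> cnf \<Rightarrow> assignment set" where
  "Tset n k \<Phi> = {\<tau> \<in> assignments n.
      real (num_unsat \<Phi> \<tau>) \<le> real n * rho n k (length \<Phi>) / 10}"

definition hdist :: "assignment \<Rightarrow> assignment \<Rightarrow> nat" where
  "hdist \<sigma> \<tau> = card {i. i < length \<sigma> \<and> \<sigma> ! i \<noteq> \<tau> ! i}"

definition Dball :: "nat \<Rightarrow> nat \<Rightarrow> assignment \<Rightarrow> real \<Rightarrow> real \<Rightarrow> assignment set" where
  "Dball n k \<sigma> r1 r2 = {\<tau> \<in> assignments n.
      \<lfloor>r1 * kappa k * real n\<rfloor> \<le> int (hdist \<sigma> \<tau>) \<and>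
      int (hdist \<sigma> \<tau>) \<le> \<lfloor>r2 * kappa k * real n\<rfloor>}"

inductive greedy_reach :: "nat \<Rightarrow> nat \<Rightarrow> cnf \<Rightarrow> assignment set \<Rightarrow> bool"
  for n k \<Phi> where
  start: "greedy_reach n k \<Phi> {}"
| step: "greedy_reach n k \<Phi> M \<Longrightarrow>
         \<tau> \<in> Tset n k \<Phi> - (\<Union>\<mu>\<in>M. Dball n k \<mu> 0 2) \<Longrightarrow>
         greedy_reach n k \<Phi> (insert \<tau> M)"

definition greedy_outcome :: "nat \<Rightarrow> nat \<Rightarrow> cnf \<Rightarrow> assignment set \<Rightarrow> bool" where
  "greedy_outcome n k \<Phi> M \<longleftrightarrow> greedy_reach n k \<Phi> M \<and>
     Tset n k \<Phi> - (\<Union>\<mu>\<in>M. Dball n k \<mu> 0 2) = {}"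

definition Dmist :: "nat \<Rightarrow> nat \<Rightarrow> assignment set \<Rightarrow> assignment set" where
  "Dmist n k M = (\<Union>\<sigma>\<in>M. Dball n k \<sigma> 0 10)"

end

theory Submission
  imports Defs
begin

lemma sum_lists_Suc:
  assumes "finite A"
  shows "(\<Sum>xs\<in>{xs. set xs \<subseteq> A \<and> length xs = Suc m}. F xs)
       = (\<Sum>a\<in>A. \<Sum>xs\<in>{xs. set xs \<subseteq> A \<and> length xs = m}. F (a#xs))"
proof -
  have "(\<Sum>xs\<in>{xs. set xs \<subseteq> A \<and> length xs = Suc m}. F xs)
     = (\<Sum>(xs,a)\<in>{xs. set xs \<subseteq> A \<and> length xs = m} \<times> A. F (a # xs))"
    unfolding lists_length_Suc_eq
    by (subst sum.reindex) (auto simp: inj_on_def intro!: sum.cong)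
  also have "\<dots> = (\<Sum>xs\<in>{xs. set xs \<subseteq> A \<and> length xs = m}. \<Sum>a\<in>A. F (a#xs))"
    by (simp add: sum.cartesian_product)
  also have "\<dots> = (\<Sum>a\<in>A. \<Sum>xs\<in>{xs. set xs \<subseteq> A \<and> length xs = m}. F (a#xs))"
    by (rule sum.swap)
  finally show ?thesis .
qed

lemma sum_prod_lists:
  fixes f :: "'a \<Rightarrow> real"
  assumes "finite A"
  shows "(\<Sum>xs\<in>{xs. set xs \<subseteq> A \<and> length xs = m}. prod_list (map f xs)) = (\<Sum>a\<in>A. f a) ^ m"
proof (induction m)
  case 0
  have "{xs. set xs \<subseteq> A \<and> length xs = 0} = {[]}" by auto
  then show ?case by simp
next
  case (Suc m)
  show ?case
    by (simp add: sum_lists_Suc[OF assms] Suc sum_distrib_left[symmetric] sum_distrib_right[symmetric])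
qed

lemma exp_num_unsat:
  "exp (- real (num_unsat \<Phi> \<tau>)) = prod_list (map (\<lambda>C. if clause_unsat \<tau> C then exp (-1) else 1) \<Phi>)"
proof (induction \<Phi>)
  case Nil then show ?case by (simp add: num_unsat_def)
next
  case (Cons C \<Phi>)
  show ?case
  proof (cases "clause_unsat \<tau> C")
    case True
    have "num_unsat (C#\<Phi>) \<tau> = Suc (num_unsat \<Phi> \<tau>)" using True by (simp add: num_unsat_def)
    then have "exp (- real (num_unsat (C#\<Phi>) \<tau>)) = exp (-1) * exp (- real (num_unsat \<Phi> \<tau>))"
      by (simp add: exp_add[symmetric])
    then show ?thesis using Cons True by simp
  next
    case False
    then show ?thesis using Cons by (simp add: num_unsat_def)
  qed
qed

lemma hdist_Cons:
  "length \<sigma> = length \<tau> \<Longrightarrow> hdist (a#\<sigma>) (b#\<tau>) = (if a \<noteq> b then 1 else 0) + hdist \<sigma> \<tau>"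
proof -
  assume l: "length \<sigma> = length \<tau>"
  have "{i. i < length (a#\<sigma>) \<and> (a#\<sigma>) ! i \<noteq> (b#\<tau>) ! i}
      = (if a \<noteq> b then {0} else {}) \<union> Suc ` {i. i < length \<sigma> \<and> \<sigma> ! i \<noteq> \<tau> ! i}"
  proof (rule set_eqI)
    fix i show "i \<in> {i. i < length (a#\<sigma>) \<and> (a#\<sigma>) ! i \<noteq> (b#\<tau>) ! i} \<longleftrightarrow>
       i \<in> (if a \<noteq> b then {0} else {}) \<union> Suc ` {i. i < length \<sigma> \<and> \<sigma> ! i \<noteq> \<tau> ! i}"
      by (cases i) auto
  qed
  then show ?thesis unfolding hdist_def
    by (simp add: card_image)
qed


definition Lits :: "nat \<Rightarrow> literal set" where "Lits n = {0..<n} \<times> UNIV"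
definition Cl :: "nat \<Rightarrow> nat \<Rightarrow> clause set" where "Cl n k = {C. set C \<subseteq> Lits n \<and> length C = k}"

lemma finite_Lits: "finite (Lits n)" by (simp add: Lits_def)
lemma card_Lits: "card (Lits n) = 2 * n" by (simp add: Lits_def card_cartesian_product)
lemma finite_Cl: "finite (Cl n k)" by (simp add: Cl_def finite_lists_length_eq finite_Lits)
lemma card_Cl: "card (Cl n k) = (2*n)^k" by (simp add: Cl_def card_lists_length_eq finite_Lits card_Lits)

lemma kcnf_space_eq: "kcnf_space n k m = {\<Phi>. set \<Phi> \<subseteq> Cl n k \<and> length \<Phi> = m}"
proof -
  have e: "(set C \<subseteq> {0..<n} \<times> UNIV) = (\<forall>l\<in>set C. fst l < n)" for C :: clause
    by (auto simp: mem_Times_iff)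
  show ?thesis unfolding kcnf_space_def Cl_def Lits_def e by blast
qed

lemma finite_kcnf: "finite (kcnf_space n k m)"
  by (simp add: kcnf_space_eq finite_lists_length_eq finite_Cl)
lemma card_kcnf: "card (kcnf_space n k m) = ((2*n)^k)^m"
  by (simp add: kcnf_space_eq card_lists_length_eq finite_Cl card_Cl)

lemma unsat_clauses:
  assumes "length \<tau> = n"
  shows "{C \<in> Cl n k. clause_unsat \<tau> C} = {C. set C \<subseteq> (\<lambda>i. (i, \<not> \<tau>!i)) ` {0..<n} \<and> length C = k}"
proof -
  have l: "(l \<in> Lits n \<and> \<not> lit_sat \<tau> l) = (l \<in> (\<lambda>i. (i, \<not> \<tau>!i)) ` {0..<n})" for l
    by (cases l) (auto simp: Lits_def lit_sat_def)
  have "(set C \<subseteq> Lits n \<and> clause_unsat \<tau> C) = (set C \<subseteq> (\<lambda>i. (i, \<not> \<tau>!i)) ` {0..<n})" for C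
    unfolding clause_unsat_def using l by blast
  then show ?thesis unfolding Cl_def by blast
qed

lemma card_unsat_clauses:
  assumes "length \<tau> = n"
  shows "card {C \<in> Cl n k. clause_unsat \<tau> C} = n^k"
  unfolding unsat_clauses[OF assms]
  by (simp add: card_lists_length_eq card_image inj_on_def)

lemma sum_h:
  assumes "length \<tau> = n"
  shows "(\<Sum>C\<in>Cl n k. if clause_unsat \<tau> C then exp (-1) else 1)
     = real ((2*n)^k) - (1 - exp (-1)) * real (n^k)"
proof -
  have "(\<Sum>C\<in>Cl n k. if clause_unsat \<tau> C then exp (-1) else (1::real))
      = (\<Sum>C\<in>Cl n k. 1 - (1 - exp (-1)) * (if clause_unsat \<tau> C then 1 else 0))"
    by (rule sum.cong) auto
  also have "\<dots> = real (card (Cl n k)) - (1 - exp (-1)) * (\<Sum>C\<in>Cl n k. if clause_unsat \<tau> C then 1 else 0)"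
    by (simp add: sum_subtractf sum_distrib_left)
  also have "(\<Sum>C\<in>Cl n k. if clause_unsat \<tau> C then 1 else (0::real)) = real (card {C \<in> Cl n k. clause_unsat \<tau> C})"
    using finite_Cl by (simp add: sum.If_cases Int_def conj_commute)
  finally show ?thesis by (simp add: card_Cl card_unsat_clauses[OF assms])
qed

lemma count_T_tau:
  assumes "length \<tau> = n" "n \<ge> 1"
  shows "real (card {\<Phi> \<in> kcnf_space n k m. real (num_unsat \<Phi> \<tau>) \<le> a})
     \<le> exp a * real (card (kcnf_space n k m)) * exp (- (1 - exp (-1)) * real m / 2^k)"
proof -
  let ?S = "kcnf_space n k m"
  let ?h = "\<lambda>C. if clause_unsat \<tau> C then exp (-1) else (1::real)"
  have "real (card {\<Phi> \<in> ?S. real (num_unsat \<Phi> \<tau>) \<le> a}) = (\<Sum>\<Phi>\<in>?S. if real (num_unsat \<Phi> \<tau>) \<le> a then 1 else 0)"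
    using finite_kcnf by (simp add: sum.If_cases Int_def conj_commute)
  also have "\<dots> \<le> (\<Sum>\<Phi>\<in>?S. exp a * exp (- real (num_unsat \<Phi> \<tau>)))"
    by (rule sum_mono) (auto simp: exp_add[symmetric])
  also have "\<dots> = exp a * (\<Sum>\<Phi>\<in>?S. prod_list (map ?h \<Phi>))"
    by (simp add: sum_distrib_left exp_num_unsat)
  also have "(\<Sum>\<Phi>\<in>?S. prod_list (map ?h \<Phi>)) = (\<Sum>C\<in>Cl n k. ?h C) ^ m"
    unfolding kcnf_space_eq by (rule sum_prod_lists[OF finite_Cl])
  also have "\<dots> = (real ((2*n)^k) * (1 - (1 - exp (-1)) / 2^k)) ^ m"
  proof -
    have "real ((2*n)^k) * (1 - (1 - exp (-1)) / 2^k) = real ((2*n)^k) - (1 - exp (-1)) * real (n^k)"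
      by (simp add: field_simps power_mult_distrib)
    then show ?thesis by (simp add: sum_h[OF assms(1)])
  qed
  also have "\<dots> = real (card ?S) * (1 - (1 - exp (-1)) / 2^k) ^ m"
    by (simp add: card_kcnf power_mult_distrib)
  also have "(1 - (1 - exp (-1)) / (2::real)^k) ^ m \<le> exp (- (1 - exp (-1)) / (2::real)^k) ^ m"
  proof (rule power_mono)
    have "exp (-1) < (1::real)" by simp
    moreover have "exp (-1) > (0::real)" by simp
    ultimately have "(1 - exp (-1)) / 2^k \<le> (1::real)"
      by (simp add: divide_le_eq_1 order_trans[of _ 1 "2^k"])
    then show "0 \<le> 1 - (1 - exp (-1)) / (2::real)^k" by simp
    show "1 - (1 - exp (-1)) / (2::real) ^ k \<le> exp (- (1 - exp (-1)) / (2::real) ^ k)"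
      using exp_ge_add_one_self[of "- (1 - exp (-1)) / (2::real) ^ k"] by (simp only: minus_divide_left[symmetric])
  qed
  also have "exp (- (1 - exp (-1)) / (2::real)^k) ^ m = exp (- (1 - exp (-1)) * real m / 2^k)"
    by (simp add: exp_of_nat_mult[symmetric] algebra_simps)
  finally show ?thesis
    by (simp add: mult_left_mono mult.assoc)
qed

lemma sum_hdist:
  fixes y :: real
  shows "length \<sigma> = n \<Longrightarrow> (\<Sum>\<tau>\<in>assignments n. y ^ hdist \<sigma> \<tau>) = (1 + y) ^ n"
proof (induction \<sigma> arbitrary: n)
  case Nil
  have "assignments 0 = {[]}" by (auto simp: assignments_def)
  then show ?case using Nil by (simp add: hdist_def)
next
  case (Cons a \<sigma>)
  then obtain n' where n: "n = Suc n'" "length \<sigma> = n'" by auto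
  have A: "assignments N = {xs. set xs \<subseteq> UNIV \<and> length xs = N}" for N by (simp add: assignments_def)
  have "(\<Sum>\<tau>\<in>assignments n. y ^ hdist (a#\<sigma>) \<tau>)
     = (\<Sum>b\<in>UNIV. \<Sum>\<tau>\<in>assignments n'. y ^ hdist (a#\<sigma>) (b#\<tau>))"
    unfolding A n(1) by (rule sum_lists_Suc) simp
  also have "\<dots> = (\<Sum>b\<in>UNIV. \<Sum>\<tau>\<in>assignments n'. y ^ (if a \<noteq> b then 1 else 0) * y ^ hdist \<sigma> \<tau>)"
    by (intro sum.cong refl) (simp add: hdist_Cons n(2) assignments_def power_add)
  also have "\<dots> = (\<Sum>b\<in>UNIV. y ^ (if a \<noteq> b then 1 else 0) * (1+y)^n')"
    by (simp add: sum_distrib_left[symmetric] Cons.IH n(2))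
  also have "\<dots> = (1+y)^n" by (simp add: UNIV_bool n(1) algebra_simps)
  finally show ?case .
qed


lemma finite_assignments: "finite (assignments n)"
proof -
  have "assignments n = {xs. set xs \<subseteq> (UNIV::bool set) \<and> length xs = n}" by (simp add: assignments_def)
  then show ?thesis using finite_lists_length_eq[of "UNIV::bool set" n] by simp
qed

lemma ball_card:
  assumes "length \<sigma> = n" "k \<ge> 1"
  shows "real (card {\<tau>\<in>assignments n. hdist \<sigma> \<tau> \<le> R}) \<le> real k ^ R * (1 + 1/real k) ^ n"
proof -
  have "real (card {\<tau>\<in>assignments n. hdist \<sigma> \<tau> \<le> R}) = (\<Sum>\<tau>\<in>assignments n. if hdist \<sigma> \<tau> \<le> R then 1 else 0)"
    using finite_assignments by (simp add: sum.If_cases Int_def conj_commute)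
  also have "\<dots> \<le> (\<Sum>\<tau>\<in>assignments n. real k ^ R * (1/real k) ^ hdist \<sigma> \<tau>)"
  proof (rule sum_mono)
    fix \<tau> show "(if hdist \<sigma> \<tau> \<le> R then 1 else 0) \<le> real k ^ R * (1/real k) ^ hdist \<sigma> \<tau>"
    proof (cases "hdist \<sigma> \<tau> \<le> R")
      case True
      then have "real k ^ R = real k ^ (R - hdist \<sigma> \<tau>) * real k ^ hdist \<sigma> \<tau>"
        by (simp add: power_add[symmetric])
      then have "real k ^ R * (1/real k) ^ hdist \<sigma> \<tau> = real k ^ (R - hdist \<sigma> \<tau>)"
        using assms(2) by (simp add: power_one_over field_simps)
      moreover have "real k ^ (R - hdist \<sigma> \<tau>) \<ge> 1" using assms(2) by simp
      ultimately show ?thesis using True by simp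
    qed simp
  qed
  also have "\<dots> = real k ^ R * (1 + 1/real k) ^ n"
    by (simp add: sum_distrib_left[symmetric] sum_hdist[OF assms(1)])
  finally show ?thesis .
qed

lemma reach_subset: "greedy_reach n k \<Phi> M \<Longrightarrow> M \<subseteq> Tset n k \<Phi>"
  by (induction rule: greedy_reach.induct) auto

lemma Dball_sub:
  assumes "length \<sigma> = n"
  shows "Dball n k \<sigma> 0 10 \<subseteq> {\<tau>\<in>assignments n. hdist \<sigma> \<tau> \<le> nat \<lfloor>10 * kappa k * real n\<rfloor>}"
  unfolding Dball_def by auto

lemma D_bound:
  assumes "greedy_outcome n k \<Phi> M" "k \<ge> 1"
  shows "real (card (Dmist n k M)) \<le> real (card (Tset n k \<Phi>)) * (real k ^ nat \<lfloor>10 * kappa k * real n\<rfloor> * (1 + 1/real k) ^ n)"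
proof -
  let ?R = "nat \<lfloor>10 * kappa k * real n\<rfloor>"
  let ?B = "real k ^ ?R * (1 + 1/real k) ^ n"
  have MT: "M \<subseteq> Tset n k \<Phi>" using assms(1) reach_subset greedy_outcome_def by blast
  have fT: "finite (Tset n k \<Phi>)"
    by (rule finite_subset[OF _ finite_assignments[of n]]) (auto simp: Tset_def)
  have fM: "finite M" using MT fT finite_subset by blast
  have len: "\<sigma> \<in> M \<Longrightarrow> length \<sigma> = n" for \<sigma> using MT by (auto simp: Tset_def assignments_def)
  have "card (Dmist n k M) \<le> (\<Sum>\<sigma>\<in>M. card (Dball n k \<sigma> 0 10))"
    unfolding Dmist_def by (rule card_UN_le[OF fM])
  then have "real (card (Dmist n k M)) \<le> (\<Sum>\<sigma>\<in>M. real (card (Dball n k \<sigma> 0 10)))"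
    by (simp add: of_nat_sum[symmetric] del: of_nat_sum)
  also have "\<dots> \<le> (\<Sum>\<sigma>\<in>M. ?B)"
  proof (rule sum_mono)
    fix \<sigma> assume s: "\<sigma> \<in> M"
    have "card (Dball n k \<sigma> 0 10) \<le> card {\<tau>\<in>assignments n. hdist \<sigma> \<tau> \<le> ?R}"
      by (rule card_mono) (auto intro: finite_subset[OF _ finite_assignments] dest: subsetD[OF Dball_sub[OF len[OF s]]])
    then show "real (card (Dball n k \<sigma> 0 10)) \<le> ?B"
      using ball_card[OF len[OF s] assms(2), of ?R] by linarith
  qed
  also have "\<dots> = real (card M) * ?B" by simp
  also have "\<dots> \<le> real (card (Tset n k \<Phi>)) * ?B"
    by (rule mult_right_mono) (use card_mono[OF fT MT] assms(2) in auto)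
  finally show ?thesis .
qed

lemma sum_T_bound:
  assumes "n \<ge> 1"
  shows "(\<Sum>\<Phi>\<in>kcnf_space n k m. real (card (Tset n k \<Phi>)))
     \<le> 2^n * (exp (real m / (10 * 2^k)) * real (card (kcnf_space n k m)) * exp (- (1 - exp (-1)) * real m / 2^k))"
proof -
  let ?S = "kcnf_space n k m" let ?A = "assignments n"
  let ?a = "real m / (10 * 2^k)"
  have thr: "\<Phi> \<in> ?S \<Longrightarrow> real n * rho n k (length \<Phi>) / 10 = ?a" for \<Phi>
    using assms by (auto simp: kcnf_space_def rho_def field_simps)
  have "(\<Sum>\<Phi>\<in>?S. real (card (Tset n k \<Phi>))) = (\<Sum>\<Phi>\<in>?S. \<Sum>\<tau>\<in>?A. if real (num_unsat \<Phi> \<tau>) \<le> ?a then 1 else 0)"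
  proof (rule sum.cong[OF refl])
    fix \<Phi> assume "\<Phi> \<in> ?S"
    then have "Tset n k \<Phi> = {\<tau>\<in>?A. real (num_unsat \<Phi> \<tau>) \<le> ?a}" by (simp add: Tset_def thr)
    then show "real (card (Tset n k \<Phi>)) = (\<Sum>\<tau>\<in>?A. if real (num_unsat \<Phi> \<tau>) \<le> ?a then 1 else 0)"
      using finite_assignments by (simp add: sum.If_cases Int_def conj_commute)
  qed
  also have "\<dots> = (\<Sum>\<tau>\<in>?A. \<Sum>\<Phi>\<in>?S. if real (num_unsat \<Phi> \<tau>) \<le> ?a then 1 else 0)"
    by (rule sum.swap)
  also have "\<dots> = (\<Sum>\<tau>\<in>?A. real (card {\<Phi>\<in>?S. real (num_unsat \<Phi> \<tau>) \<le> ?a}))"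
    using finite_kcnf by (simp add: sum.If_cases Int_def conj_commute)
  also have "\<dots> \<le> (\<Sum>\<tau>\<in>?A. exp ?a * real (card ?S) * exp (- (1 - exp (-1)) * real m / 2^k))"
    by (rule sum_mono) (rule count_T_tau, use assms in \<open>auto simp: assignments_def\<close>)
  also have "\<dots> = real (card ?A) * (exp ?a * real (card ?S) * exp (- (1 - exp (-1)) * real m / 2^k))"
    by simp
  also have "card ?A = 2^n"
  proof -
    have "?A = {xs. set xs \<subseteq> (UNIV::bool set) \<and> length xs = n}" by (simp add: assignments_def)
    then show ?thesis using card_lists_length_eq[of "UNIV::bool set" n] by simp
  qed
  finally show ?thesis by simp
qed


lemma analytic:
  fixes k n m :: nat
  assumes k: "k \<ge> 3" and n: "n \<ge> 1" and hm: "real m / 2^k \<ge> 195 * (ln (real k))\<^sup>2 / real k * real n"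
  shows "real k ^ nat \<lfloor>10 * kappa k * real n\<rfloor> * (1 + 1/real k) ^ n
         * exp (real m / (10 * 2^k)) * exp (- (1 - exp (-1)) * real m / 2^k) * exp (2 * real n / (real k)\<^sup>2)
         \<le> exp (- ((ln (real k))\<^sup>2 / real k) * real n)"
proof -
  define R where "R = nat \<lfloor>10 * kappa k * real n\<rfloor>"
  define L where "L = ln (real k)"
  define P where "P = real m / 2^k"
  have kpos: "real k > 0" using k by simp
  have L1: "L \<ge> 1" unfolding L_def
    using k exp_le by (subst ln_ge_iff) auto
  have kap: "kappa k \<ge> 0" using L1 by (simp add: kappa_def L_def[symmetric])
  have R_le: "real R \<le> 10 * kappa k * real n"
    unfolding R_def using kap by (simp add: of_nat_nat)
  have e1: "real k ^ R = exp (real R * L)"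
    using kpos by (simp add: L_def exp_of_nat_mult)
  have e2: "(1 + 1/real k) ^ n \<le> exp (real n / real k)"
  proof -
    have "(1 + 1/real k) ^ n \<le> exp (1/real k) ^ n"
      by (rule power_mono) (use kpos exp_ge_add_one_self[of "1/real k"] in auto)
    also have "\<dots> = exp (real n / real k)" by (simp add: exp_of_nat_mult[symmetric])
    finally show ?thesis .
  qed
  have ee: "exp (-1) \<le> (1/2::real)"
  proof -
    have "exp (1::real) \<ge> 2" using exp_ge_add_one_self[of 1] by simp
    then show ?thesis by (simp add: exp_minus field_simps)
  qed
  have P_ge: "P \<ge> 195 * L^2 / real k * real n" using hm by (simp add: P_def L_def)
  have "real k ^ R * (1 + 1/real k) ^ n * exp (real m / (10 * 2^k)) * exp (- (1 - exp (-1)) * real m / 2^k) * exp (2 * real n / (real k)\<^sup>2)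
      \<le> exp (real R * L) * exp (real n / real k) * exp (P / 10) * exp (- (1 - exp (-1)) * P) * exp (2 * real n / (real k)\<^sup>2)"
  proof -
    have i1: "real k ^ R * (1 + 1/real k) ^ n \<le> exp (real R * L) * exp (real n / real k)"
      unfolding e1 by (rule mult_left_mono[OF e2]) simp
    have q1: "real m / (10 * 2^k) = P / 10" and q2: "- (1 - exp (-1)) * real m / 2^k = - (1 - exp (-1)) * P"
      by (simp_all add: P_def algebra_simps)
    show ?thesis unfolding q1 q2 by (intro mult_right_mono i1) (auto simp: algebra_simps)
  qed
  also have "\<dots> = exp (real R * L + real n / real k + P / 10 - (1 - exp (-1)) * P + 2 * real n / (real k)\<^sup>2)"
    by (simp only: exp_add[symmetric]) (rule arg_cong[where f=exp], simp add: algebra_simps)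
  also have "\<dots> \<le> exp (- (L^2 / real k) * real n)"
  proof (subst exp_le_cancel_iff)
    have a1: "real R * L \<le> 10 * (L^2 / real k * real n)"
      using mult_right_mono[OF R_le, of L] L1 by (simp add: kappa_def L_def[symmetric] power2_eq_square algebra_simps)
    have P0: "P \<ge> 0" unfolding P_def by simp
    have a2: "P / 10 - (1 - exp (-1)) * P \<le> - (2/5) * P"
      using mult_right_mono[OF ee P0] by (simp add: algebra_simps)
    have a3: "2 * real n / (real k)\<^sup>2 \<le> real n / real k"
    proof -
      have "real n * 2 \<le> real k * real n" using k by (intro mult_right_mono[of 2 "real k" "real n", simplified mult.commute]) auto
      then show ?thesis using kpos by (simp add: field_simps power2_eq_square)
    qed
    have a4: "L^2 \<ge> 1" using L1 by (simp add: one_le_power)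
    have a5: "real n / real k \<le> L^2 / real k * real n"
      using a4 kpos n by (simp add: field_simps)
    have a6: "(2/5) * P \<ge> 78 * (L^2 / real k * real n)" using P_ge by simp
    show "real R * L + real n / real k + P / 10 - (1 - exp (-1)) * P + 2 * real n / (real k)\<^sup>2
          \<le> - (L^2 / real k) * real n"
    proof -
      have "- (L^2 / real k) * real n = - (L^2 / real k * real n)" by simp
      moreover have "L^2 / real k * real n \<ge> 0" using kpos by simp
      ultimately show ?thesis using a1 a2 a3 a5 a6 by linarith
    qed
  qed
  finally show ?thesis by (simp add: L_def R_def)
qed


theorem mainTheorem8:
  "\<exists>k0::nat. \<forall>k\<ge>k0. \<forall>m :: nat \<Rightarrow> nat.
     (\<forall>n\<ge>1. real (m n) / real n \<ge> 195 * 2 ^ k * (ln (real k))\<^sup>2 / real k) \<longrightarrow>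
     (\<exists>c>0. \<exists>n0. \<forall>n\<ge>n0.
        prob_kcnf n k (m n)
          (\<lambda>\<Phi>. \<forall>M. greedy_outcome n k \<Phi> M \<longrightarrow>
                 real (card (Dmist n k M)) \<le> 2 ^ n * exp (- 2 * real n / (real k)\<^sup>2))
        \<ge> 1 - exp (- c * real n))"
proof (rule exI[of _ 3], intro allI impI)
  fix k :: nat and m :: "nat \<Rightarrow> nat"
  assume k: "3 \<le> k"
  assume hyp: "\<forall>n\<ge>1. real (m n) / real n \<ge> 195 * 2 ^ k * (ln (real k))\<^sup>2 / real k"
  define c where "c = (ln (real k))\<^sup>2 / real k"
  have kpos: "real k > 0" using k by simp
  have L1: "ln (real k) \<ge> 1" using k exp_le by (subst ln_ge_iff) auto
  have c0: "c > 0" unfolding c_def using L1 kpos by (intro divide_pos_pos) auto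
  show "\<exists>c>0. \<exists>n0. \<forall>n\<ge>n0.
        prob_kcnf n k (m n)
          (\<lambda>\<Phi>. \<forall>M. greedy_outcome n k \<Phi> M \<longrightarrow>
                 real (card (Dmist n k M)) \<le> 2 ^ n * exp (- 2 * real n / (real k)\<^sup>2))
        \<ge> 1 - exp (- c * real n)"
  proof (intro exI[of _ c] conjI c0 exI[of _ 1] allI impI)
    fix n :: nat assume n: "1 \<le> n"
    define mm where "mm = m n"
    define S where "S = kcnf_space n k mm"
    define Q where "Q = (2::real) ^ n * exp (- 2 * real n / (real k)\<^sup>2)"
    define B where "B = real k ^ nat \<lfloor>10 * kappa k * real n\<rfloor> * (1 + 1/real k) ^ n"
    define G where "G = exp (real mm / (10 * 2^k)) * real (card S) * exp (- (1 - exp (-1)) * real mm / 2^k)"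
    define Pr where "Pr = (\<lambda>\<Phi>. \<forall>M. greedy_outcome n k \<Phi> M \<longrightarrow> real (card (Dmist n k M)) \<le> Q)"
    have Q0: "Q > 0" unfolding Q_def by simp
    have B0: "B \<ge> 0" unfolding B_def using kpos by simp
    have fS: "finite S" unfolding S_def by (rule finite_kcnf)
    have cS: "card S > 0" unfolding S_def card_kcnf using n by simp
    have hm: "real mm / 2^k \<ge> 195 * (ln (real k))\<^sup>2 / real k * real n"
    proof -
      have "real (m n) / real n \<ge> 195 * 2 ^ k * (ln (real k))\<^sup>2 / real k" using hyp n by auto
      then have "real (m n) \<ge> 195 * 2 ^ k * (ln (real k))\<^sup>2 / real k * real n" using n
        by (simp add: pos_le_divide_eq)
      then show ?thesis unfolding mm_def by (simp add: pos_le_divide_eq mult.commute mult.left_commute)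
    qed
    have bad: "1 \<le> real (card (Tset n k \<Phi>)) * B / Q" if "\<Phi> \<in> S" "\<not> Pr \<Phi>" for \<Phi>
    proof -
      from that obtain M where M: "greedy_outcome n k \<Phi> M" "real (card (Dmist n k M)) > Q"
        unfolding Pr_def by auto
      have "real (card (Dmist n k M)) \<le> real (card (Tset n k \<Phi>)) * B"
        unfolding B_def using D_bound[OF M(1)] k by simp
      then show ?thesis using M(2) Q0 by (simp add: pos_le_divide_eq)
    qed
    have "real (card {\<Phi>\<in>S. \<not> Pr \<Phi>}) = (\<Sum>\<Phi>\<in>{\<Phi>\<in>S. \<not> Pr \<Phi>}. 1)" by simp
    also have "\<dots> \<le> (\<Sum>\<Phi>\<in>{\<Phi>\<in>S. \<not> Pr \<Phi>}. real (card (Tset n k \<Phi>)) * B / Q)"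
      by (rule sum_mono) (use bad in auto)
    also have "\<dots> \<le> (\<Sum>\<Phi>\<in>S. real (card (Tset n k \<Phi>)) * B / Q)"
      by (rule sum_mono2) (use fS Q0 B0 in auto)
    also have "\<dots> = (B / Q) * (\<Sum>\<Phi>\<in>S. real (card (Tset n k \<Phi>)))"
      by (simp add: sum_distrib_left mult.commute)
    also have "\<dots> \<le> (B / Q) * (2^n * G)"
      by (rule mult_left_mono) (use sum_T_bound[OF n, of k mm] B0 Q0 in \<open>auto simp: S_def G_def\<close>)
    finally have cb: "real (card {\<Phi>\<in>S. \<not> Pr \<Phi>}) \<le> B / Q * (2^n * G)" .
    have split: "real (card S) = real (card {\<Phi>\<in>S. Pr \<Phi>}) + real (card {\<Phi>\<in>S. \<not> Pr \<Phi>})"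
    proof -
      have "card S = card {\<Phi>\<in>S. Pr \<Phi>} + card {\<Phi>\<in>S. \<not> Pr \<Phi>}"
        using fS by (subst card_Un_disjoint[symmetric]) (auto intro: arg_cong[where f=card])
      then show ?thesis by simp
    qed
    have key: "B / Q * (2^n * G) / real (card S) \<le> exp (- c * real n)"
    proof -
      have "B / Q * (2^n * G) / real (card S)
          = B * exp (real mm / (10 * 2^k)) * exp (- (1 - exp (-1)) * real mm / 2^k) * exp (2 * real n / (real k)\<^sup>2)"
        using cS unfolding Q_def G_def by (simp add: exp_minus field_simps)
      also have "\<dots> \<le> exp (- ((ln (real k))\<^sup>2 / real k) * real n)"
        unfolding B_def by (rule analytic[OF k n hm])
      finally show ?thesis by (simp add: c_def)
    qed
    have "prob_kcnf n k (m n) Pr = real (card {\<Phi>\<in>S. Pr \<Phi>}) / real (card S)"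
      by (simp add: prob_kcnf_def S_def mm_def)
    also have "\<dots> = 1 - real (card {\<Phi>\<in>S. \<not> Pr \<Phi>}) / real (card S)"
      using cS split by (simp add: field_simps)
    also have "\<dots> \<ge> 1 - exp (- c * real n)"
      using key cb cS by (smt (verit) divide_right_mono of_nat_0_le_iff)
    finally have X: "prob_kcnf n k (m n) Pr \<ge> 1 - exp (- c * real n)" .
    then show "prob_kcnf n k (m n)
          (\<lambda>\<Phi>. \<forall>M. greedy_outcome n k \<Phi> M \<longrightarrow>
                 real (card (Dmist n k M)) \<le> 2 ^ n * exp (- 2 * real n / (real k)\<^sup>2))
        \<ge> 1 - exp (- c * real n)"
      unfolding Pr_def Q_def by simp
  qed
qed

end
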